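(* Assume $\beta>0$, $k>0$ and $u_0=-k$. Let $H(u,y)=\frac{y^2}{2}+\beta\left(-\frac{u^4}{4}+\frac{k+u_0}{3}u^3-\frac{ku_0}{2}u^2\right)=\frac{y^2}{2}+\beta\left(-\frac{u^4}{4}+\frac{k^2u^2}{2}\right)$, and for $h\in\left(0,\frac{\beta u_0^4}{4}\right)$ let $\Gamma_h$ be the closed component of $\{H(u,y)=h\}$ surrounding $(0,0)$. Then for every even positive integer $n$ the ratio $$G_n(h):=\frac{\oint_{\Gamma_h}u^n y\,du}{\oint_{\Gamma_h}y\,du}$$ is monotone for $h\in\left(0,\frac{\beta u_0^4}{4}\right)$.
   Context: For these parameters $(0,0)$ is a center of the Hamiltonian system $u'=y$, $y'=-\beta u(u-u_0)(k-u)$, and the curves $\Gamma_h$, $h\in(0,\beta u_0^4/4)$, form the periodic annulus around it, bounded by the heteroclinic orbits joining the saddles $(-k,0)$ and $(k,0)$. *)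

theory Defs
  imports "HOL-Analysis.Analysis"
begin

definition Ham :: "real \<Rightarrow> real \<Rightarrow> real \<Rightarrow> real \<Rightarrow> real \<Rightarrow> real" where
  "Ham \<beta> k u0 u y = y^2/2 + \<beta> * (- (u^4)/4 + (k + u0)/3 * u^3 - k*u0/2 * u^2)"

text \<open>The oval Gamma_h: the closed component of the level set {H = h} surrounding
  the origin.  For u0 = -k and 0 < h < beta k^4/4 this is exactly the part of
  the level set lying in the strip |u| < k (the other components lie in |u| > k).\<close>
definition Gamma :: "real \<Rightarrow> real \<Rightarrow> real \<Rightarrow> real \<Rightarrow> (real \<times> real) set" where
  "Gamma \<beta> k u0 h = {(u, y). \<bar>u\<bar> < k \<and> Ham \<beta> k u0 u y = h}"

text \<open>The line integral of the 1-form u^n y du along Gamma_h, traversed once in the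
  direction of the Hamiltonian flow (u' = y, i.e. clockwise).  Gamma_h is the union of
  the graphs y = +Y(u) and y = -Y(u), Y(u) = sqrt(2(h - (H(u,0)))), over the projection
  of Gamma_h to the u-axis; the upper branch is traversed with u increasing and the
  lower one with u decreasing, so both contribute  integral of u^n Y(u) du.\<close>
definition oval_integral :: "real \<Rightarrow> real \<Rightarrow> real \<Rightarrow> nat \<Rightarrow> real \<Rightarrow> real" where
  "oval_integral \<beta> k u0 n h =
     integral {u. \<exists>y. (u, y) \<in> Gamma \<beta> k u0 h}
       (\<lambda>u. 2 * u ^ n * sqrt (2 * (h - Ham \<beta> k u0 u 0)))"

definition G_ratio :: "real \<Rightarrow> real \<Rightarrow> real \<Rightarrow> nat \<Rightarrow> real \<Rightarrow> real" where
  "G_ratio \<beta> k u0 n h = oval_integral \<beta> k u0 n h / oval_integral \<beta> k u0 0 h"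

end

theory Submission
  imports Defs
begin

lemma int_pos:
  fixes g :: "real \<Rightarrow> real"
  assumes "c < d" "continuous_on {c..d} g" "\<And>x. x \<in> {c..d} \<Longrightarrow> g x \<ge> 0"
    "x0 \<in> {c..d}" "g x0 > 0"
  shows "integral {c..d} g > 0"
proof -
  have "integral {c..d} g \<ge> 0"
    by (rule integral_nonneg) (use assms integrable_continuous_interval in auto)
  moreover have "integral {c..d} g \<noteq> 0"
  proof
    assume "integral {c..d} g = 0"
    then have "\<forall>x\<in>cbox c d. g x = 0"
      using integral_cbox_eq_0_iff[of c d g] assms by auto
    then show False using assms by auto
  qed
  ultimately show ?thesis by linarith
qed

definition V :: "real \<Rightarrow> real \<Rightarrow> real \<Rightarrow> real" where
  "V \<beta> k u = \<beta> * (k^2 * u^2 / 2 - u^4 / 4)"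

definition rho :: "real \<Rightarrow> real \<Rightarrow> real \<Rightarrow> real \<Rightarrow> real" where
  "rho \<beta> k h u = 2 * sqrt (2 * max 0 (h - V \<beta> k u))"

lemma Ham_eq: "Ham \<beta> k (-k) u 0 = V \<beta> k u"
  unfolding Ham_def V_def by (simp add: algebra_simps power2_eq_square)

lemma V_mono:
  assumes "\<beta> > 0" "0 \<le> x" "x \<le> y" "y \<le> k"
  shows "V \<beta> k x \<le> V \<beta> k y"
proof -
  have "V \<beta> k y - V \<beta> k x = \<beta>/4 * ((y^2 - x^2) * (2*k^2 - x^2 - y^2))"
    unfolding V_def by (simp add: algebra_simps power2_eq_square power4_eq_xxxx)
  moreover have "y^2 - x^2 \<ge> 0" using assms by (simp add: power_mono)
  moreover have "x^2 \<le> k^2" "y^2 \<le> k^2" using assms by (simp_all add: power_mono)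
  moreover have "2*k^2 - x^2 - y^2 \<ge> 0" using calculation by linarith
  ultimately have "V \<beta> k y - V \<beta> k x \<ge> 0" using assms
    by (metis mult_nonneg_nonneg less_eq_real_def divide_nonneg_pos zero_less_numeral)
  then show ?thesis by simp
qed

lemma V_abs: "V \<beta> k \<bar>u\<bar> = V \<beta> k u"
  unfolding V_def by (simp add: power2_abs power4_eq_xxxx abs_mult_self_eq)

lemma V_mono_abs:
  assumes "\<beta> > 0" "\<bar>x\<bar> \<le> \<bar>y\<bar>" "\<bar>y\<bar> \<le> k"
  shows "V \<beta> k x \<le> V \<beta> k y"
  using V_mono[of \<beta> "\<bar>x\<bar>" "\<bar>y\<bar>" k] assms by (simp add: V_abs)

lemma V_k: "V \<beta> k k = \<beta> * k^4 / 4"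
  unfolding V_def by (simp add: algebra_simps power2_eq_square power4_eq_xxxx)

lemma oval_eq:
  assumes "\<beta> > 0" "k > 0" "0 < h" "h < \<beta> * k^4 / 4"
  shows "oval_integral \<beta> k (-k) n h = integral {-k..k} (\<lambda>u. u^n * rho \<beta> k h u)"
proof -
  let ?S = "{u. \<exists>y. (u, y) \<in> Gamma \<beta> k (-k) h}"
  have S: "?S = {u. \<bar>u\<bar> < k \<and> V \<beta> k u \<le> h}"
  proof (rule set_eqI, rule iffI)
    fix u assume "u \<in> ?S"
    then obtain y where "\<bar>u\<bar> < k" "y^2/2 + \<beta> * (- (u^4)/4 + (k + -k)/3 * u^3 - k*(-k)/2 * u^2) = h"
      unfolding Gamma_def Ham_def by auto
    moreover have "y^2 \<ge> 0" by simp
    moreover have "V \<beta> k u = \<beta> * (- (u^4)/4 + (k + -k)/3 * u^3 - k*(-k)/2 * u^2)"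
      unfolding V_def by (simp add: algebra_simps power2_eq_square)
    ultimately show "u \<in> {u. \<bar>u\<bar> < k \<and> V \<beta> k u \<le> h}"
      by auto
  next
    fix u assume u: "u \<in> {u. \<bar>u\<bar> < k \<and> V \<beta> k u \<le> h}"
    let ?y = "sqrt (2 * (h - V \<beta> k u))"
    have "?y^2 = 2 * (h - V \<beta> k u)" using u by simp
    have "Ham \<beta> k (-k) u ?y = ?y^2/2 + Ham \<beta> k (-k) u 0" unfolding Ham_def by simp
    then have "Ham \<beta> k (-k) u ?y = h"
      using Ham_eq[of \<beta> k u] \<open>?y^2 = _\<close> by (simp add: field_simps)
    then show "u \<in> ?S" using u unfolding Gamma_def by auto
  qed
  have "oval_integral \<beta> k (-k) n h =
      integral UNIV (\<lambda>u. if u \<in> ?S then 2 * u ^ n * sqrt (2 * (h - Ham \<beta> k (-k) u 0)) else 0)"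
    unfolding oval_integral_def by (rule integral_restrict_UNIV[symmetric])
  also have "\<dots> = integral UNIV (\<lambda>u. if u \<in> {-k..k} then u^n * rho \<beta> k h u else 0)"
  proof (rule arg_cong[where f="integral UNIV"], rule ext)
    fix u
    show "(if u \<in> ?S then 2 * u ^ n * sqrt (2 * (h - Ham \<beta> k (-k) u 0)) else 0) =
          (if u \<in> {-k..k} then u^n * rho \<beta> k h u else 0)"
    proof (cases "u \<in> ?S")
      case True
      then show ?thesis unfolding S rho_def Ham_eq by auto
    next
      case False
      show ?thesis
      proof (cases "u \<in> {-k..k}")
        case True
        have "V \<beta> k u \<ge> h"
        proof (cases "\<bar>u\<bar> < k")
          case True with False S show ?thesis by auto
        next
          case False
          with \<open>u \<in> {-k..k}\<close> have "\<bar>u\<bar> = k" by auto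
          then have "V \<beta> k u = V \<beta> k k" by (metis V_abs)
          then show ?thesis using V_k assms by simp
        qed
        then show ?thesis using False True unfolding rho_def by simp
      next
        case False2: False
        then show ?thesis using False by auto
      qed
    qed
  qed
  also have "\<dots> = integral {-k..k} (\<lambda>u. u^n * rho \<beta> k h u)"
    by (rule integral_restrict_UNIV)
  finally show ?thesis .
qed

lemma rho_cont: "continuous_on S (rho \<beta> k h)"
  unfolding rho_def V_def by (intro continuous_intros) auto

lemma rho_nonneg: "rho \<beta> k h u \<ge> 0"
  unfolding rho_def by simp

lemma ratio1:
  fixes h h' v w :: real
  assumes "h < h'" "v \<le> w" "w < h"
  shows "sqrt (2*(h'-v)) \<le> sqrt ((h'-w)/(h-w)) * sqrt (2*(h-v))"
proof -
  have "(h'-w)*(h-v) - (h'-v)*(h-w) = (h'-h)*(w-v)" by algebra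
  moreover have "(h'-h)*(w-v) \<ge> 0" using assms by simp
  ultimately have "2*(h'-v) \<le> (h'-w)/(h-w) * (2*(h-v))"
    using assms by (simp add: field_simps)
  then show ?thesis by (simp add: real_sqrt_mult[symmetric])
qed

lemma ratio2:
  fixes h h' v w :: real
  assumes "h < h'" "w \<le> v" "v < h"
  shows "sqrt ((h'-w)/(h-w)) * sqrt (2*(h-v)) \<le> sqrt (2*(h'-v))"
proof -
  have "(h'-w)*(h-v) - (h'-v)*(h-w) = (h'-h)*(w-v)" by algebra
  moreover have "(h'-h)*(w-v) \<le> 0" using assms by (simp add: mult_nonneg_nonpos)
  ultimately have "(h'-w)/(h-w) * (2*(h-v)) \<le> 2*(h'-v)"
    using assms by (simp add: field_simps)
  then show ?thesis by (simp add: real_sqrt_mult[symmetric])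
qed

lemma rho_pos_iff: "rho \<beta> k h u = 2 * sqrt (2 * (h - V \<beta> k u)) \<or> (V \<beta> k u \<ge> h \<and> rho \<beta> k h u = 0)"
  unfolding rho_def by (auto simp: max_def)

lemma main_ineq:
  fixes \<beta> k h h' :: real and n :: nat
  assumes b: "\<beta> > 0" and kp: "k > 0" and h: "0 < h" "h < h'" "h' < \<beta> * k^4 / 4"
    and n: "even n" "n > 0"
  shows "integral {-k..k} (\<lambda>u. u^n * rho \<beta> k h u) / integral {-k..k} (rho \<beta> k h)
       \<le> integral {-k..k} (\<lambda>u. u^n * rho \<beta> k h' u) / integral {-k..k} (rho \<beta> k h')"
proof -
  define \<rho> where "\<rho> = rho \<beta> k h"
  define \<rho>' where "\<rho>' = rho \<beta> k h'"
  define A where "A = integral {-k..k} \<rho>"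
  define B where "B = integral {-k..k} (\<lambda>u. u^n * \<rho> u)"
  define A' where "A' = integral {-k..k} \<rho>'"
  define B' where "B' = integral {-k..k} (\<lambda>u. u^n * \<rho>' u)"
  have c1: "continuous_on {-k..k} \<rho>" "continuous_on {-k..k} \<rho>'"
    unfolding \<rho>_def \<rho>'_def by (rule rho_cont)+
  have c2: "continuous_on {-k..k} (\<lambda>u. u^n * \<rho> u)" "continuous_on {-k..k} (\<lambda>u. u^n * \<rho>' u)"
    using c1 by (auto intro!: continuous_intros)
  have iA: "(\<rho> has_integral A) {-k..k}" unfolding A_def
    using c1 integrable_continuous_interval by blast
  have iA': "(\<rho>' has_integral A') {-k..k}" unfolding A'_def
    using c1 integrable_continuous_interval by blast
  have iB: "((\<lambda>u. u^n * \<rho> u) has_integral B) {-k..k}" unfolding B_def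
    using c2 integrable_continuous_interval by blast
  have iB': "((\<lambda>u. u^n * \<rho>' u) has_integral B') {-k..k}" unfolding B'_def
    using c2 integrable_continuous_interval by blast
  have nn: "\<rho> u \<ge> 0" "\<rho>' u \<ge> 0" for u unfolding \<rho>_def \<rho>'_def by (rule rho_nonneg)+
  have V0: "V \<beta> k 0 = 0" unfolding V_def by simp
  have r0: "\<rho> 0 > 0" "\<rho>' 0 > 0" unfolding \<rho>_def \<rho>'_def rho_def using V0 h by auto
  have Apos: "A > 0" unfolding A_def
    by (rule int_pos[where ?x0.0=0]) (use kp c1 nn r0 in auto)
  have A'pos: "A' > 0" unfolding A'_def
    by (rule int_pos[where ?x0.0=0]) (use kp c1 nn r0 in auto)
  have Bnn: "B \<ge> 0" using iB nn n
    by (intro has_integral_nonneg[OF iB]) (simp add: zero_le_even_power)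
  define E where "E = B / A"
  have E0: "E \<ge> 0" unfolding E_def using Bnn Apos by simp
  have EA: "E * A = B" unfolding E_def using Apos by simp
  define t where "t = root n E"
  have t0: "t \<ge> 0" unfolding t_def using E0 by (simp add: real_root_ge_zero)
  have tn: "t ^ n = E" unfolding t_def using E0 n by simp
  have ule: "u^n \<le> E \<longleftrightarrow> \<bar>u\<bar> \<le> t" for u :: real
  proof -
    have "u^n = \<bar>u\<bar>^n" using n by (simp add: power_even_abs)
    then show ?thesis using tn t0 n by (metis abs_ge_zero power_mono_iff)
  qed
  have Vk: "V \<beta> k k > h'" using V_k[of \<beta> k] h by simp
  have Vm: "V \<beta> k u \<le> V \<beta> k w" if "\<bar>u\<bar> \<le> \<bar>w\<bar>" "\<bar>w\<bar> \<le> k" for u w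
    using V_mono_abs[OF b that] .
  have claim: "\<exists>lm. \<forall>u\<in>{-k..k}. (u^n - E) * (\<rho>' u - lm * \<rho> u) \<ge> 0"
  proof (cases "V \<beta> k t < h \<and> t < k")
    case True
    define lm where "lm = sqrt ((h' - V \<beta> k t)/(h - V \<beta> k t))"
    have "(u^n - E) * (\<rho>' u - lm * \<rho> u) \<ge> 0" if u: "u \<in> {-k..k}" for u
    proof (cases "\<bar>u\<bar> \<le> t")
      case le: True
      then have f: "u^n - E \<le> 0" using ule by simp
      have Vu: "V \<beta> k u \<le> V \<beta> k t" using Vm[of u t] le t0 True by simp
      have "\<rho>' u \<le> lm * \<rho> u"
        using ratio1[OF h(2) Vu] True Vu h
        unfolding \<rho>_def \<rho>'_def rho_def lm_def by (simp add: max_def)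
      then show ?thesis using f by (simp add: mult_nonpos_nonpos)
    next
      case gt: False
      then have f: "u^n - E \<ge> 0" using ule[of u] gt tn n
        by (metis abs_ge_zero diff_ge_0_iff_ge less_eq_real_def not_le power_even_abs power_mono t0)
      have Vu: "V \<beta> k t \<le> V \<beta> k u" using Vm[of t u] gt t0 u by auto
      have "lm * \<rho> u \<le> \<rho>' u"
      proof (cases "V \<beta> k u < h")
        case True
        then show ?thesis
          using ratio2[OF h(2) Vu True] h unfolding \<rho>_def \<rho>'_def rho_def lm_def by (simp add: max_def)
      next
        case False
        then have "\<rho> u = 0" unfolding \<rho>_def rho_def by simp
        then show ?thesis using nn by simp
      qed
      then show ?thesis using f by simp
    qed
    then show ?thesis by blast
  next
    case False
    have Epos: "E > 0"
    proof (rule ccontr)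
      assume "\<not> E > 0"
      then have "E = 0" using E0 by simp
      then have "t = 0" unfolding t_def by simp
      then show False using False V0 h kp by simp
    qed
    define g where "g u = (E - u^n) * \<rho> u" for u
    have gnn: "g u \<ge> 0" if u: "u \<in> {-k..k}" for u
    proof (cases "V \<beta> k u < h")
      case True
      have "\<bar>u\<bar> < t"
      proof (rule ccontr)
        assume "\<not> \<bar>u\<bar> < t"
        then have tu: "t \<le> \<bar>u\<bar>" by simp
        have uk: "\<bar>u\<bar> \<le> k" using u by auto
        have "V \<beta> k t \<le> V \<beta> k u" using Vm[of t u] tu t0 uk by simp
        moreover have "t \<noteq> k" using Vk calculation True h by auto
        ultimately show False using False True tu uk by auto
      qed
      then have "u^n \<le> E" using ule by simp
      then show ?thesis unfolding g_def using nn by simp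
    next
      case False
      then have "\<rho> u = 0" unfolding \<rho>_def rho_def by simp
      then show ?thesis unfolding g_def by simp
    qed
    have z: "(0::real)^n = 0" using n(2) by simp
    have g0: "g 0 > 0" unfolding g_def z using Epos r0 by simp
    have gc: "continuous_on {-k..k} g" unfolding g_def using c1 by (intro continuous_intros) auto
    have "integral {-k..k} g > 0"
      by (rule int_pos[where ?x0.0=0]) (use kp gnn gc g0 in auto)
    moreover have "(g has_integral (E * A - B)) {-k..k}"
      unfolding g_def using has_integral_diff[OF has_integral_mult_right[OF iA, where c=E] iB]
      by (simp add: algebra_simps)
    ultimately show ?thesis using EA by (simp add: integral_unique)
  qed
  then obtain lm where lam: "\<And>u. u \<in> {-k..k} \<Longrightarrow> (u^n - E) * (\<rho>' u - lm * \<rho> u) \<ge> 0" by blast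
  have "((\<lambda>u. (u^n - E) * (\<rho>' u - lm * \<rho> u)) has_integral ((B' - E * A') - lm * (B - E * A))) {-k..k}"
  proof -
    have "((\<lambda>u. (u^n * \<rho>' u - E * \<rho>' u) - lm * (u^n * \<rho> u - E * \<rho> u)) has_integral ((B' - E * A') - lm * (B - E * A))) {-k..k}"
      by (intro has_integral_diff has_integral_mult_right iA iA' iB iB')
    then show ?thesis by (simp add: algebra_simps)
  qed
  then have "(B' - E * A') - lm * (B - E * A) \<ge> 0"
    by (rule has_integral_nonneg) (rule lam)
  then have "E * A' \<le> B'" using EA by simp
  then have "E \<le> B' / A'" using A'pos by (simp add: field_simps)
  then show ?thesis unfolding E_def A_def B_def A'_def B'_def \<rho>_def \<rho>'_def .
qed

theorem proposition3p11:
  fixes \<beta> k u0 :: real and n :: nat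
  assumes "\<beta> > 0" and "k > 0" and "u0 = - k"
    and "even n" and "n > 0"
  shows "mono_on {0<..<\<beta> * u0^4 / 4} (G_ratio \<beta> k u0 n)
       \<or> antimono_on {0<..<\<beta> * u0^4 / 4} (G_ratio \<beta> k u0 n)"
proof -
  have u4: "u0^4 = k^4" using assms(3) by simp
  have G: "G_ratio \<beta> k u0 n h = integral {-k..k} (\<lambda>u. u^n * rho \<beta> k h u) / integral {-k..k} (rho \<beta> k h)"
    if "h \<in> {0<..<\<beta> * k^4 / 4}" for h
    using that oval_eq[OF assms(1,2), of h n] oval_eq[OF assms(1,2), of h 0] assms(3)
    unfolding G_ratio_def by simp
  have "mono_on {0<..<\<beta> * u0^4 / 4} (G_ratio \<beta> k u0 n)"
  proof (rule mono_onI)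
    fix r s assume rs: "r \<in> {0<..<\<beta> * u0^4 / 4}" "s \<in> {0<..<\<beta> * u0^4 / 4}" "r \<le> s"
    show "G_ratio \<beta> k u0 n r \<le> G_ratio \<beta> k u0 n s"
    proof (cases "r = s")
      case True then show ?thesis by simp
    next
      case False
      then show ?thesis using rs G[of r] G[of s] main_ineq[OF assms(1,2), of r s n] assms(4,5) u4
        by auto
    qed
  qed
  then show ?thesis by blast
qed

end
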